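(* Let $0<c\le1<F$ be constants. For every $\varepsilon>0$ there exists $s_1>0$ such that for all $s\ge s_1$, every dynamic monotone function and every initial search point $x^0$ with $Z^0\ge\varepsilon n$ (and $\lambda^0=1$), with high probability the number of generations of the SA-$(1,\lambda)$-EA with success ratio $s$, update strength $F$ and mutation probability $c/n$ is $e^{\Omega(n/\log^2 n)}$.
   Context: Fix $n\in\mathbb N$ and constants $c>0$, $s>0$, $F>1$; asymptotic statements are as $n\to\infty$ with $c,s,F$ fixed, and "with high probability" means with probability $1-o(1)$. A function $f:\{0,1\}^n\to\mathbb R$ is (strictly) monotone if $f(x)>f(y)$ for all $x\ne y$ with $x_i\ge y_i$ for all $i$. A dynamic monotone function is a sequence $(f^t)_{t\ge0}$ of monotone functions, where $f^t$ may be chosen adversarially depending on the run so far, including $x^t$. The SA-$(1,\lambda)$-EA with success ratio $s$, update strength $F$ and mutation probability $c/n$ maintains $x^t\in\{0,1\}^n$ and a real $\lambda^t\ge1$. Unless stated otherwise $x^0$ is uniform on $\{0,1\}^n$ and $\lambda^0=1$. In generation $t=0,1,\dots$ it creates $\lfloor\lambda^t\rceil$ offspring $y^{t,1},\dots,y^{t,\lfloor\lambda^t\rceil}$ ($\lfloor\cdot\rceil$ = nearest integer), each independently obtained from $x^t$ by flipping every bit independently with probability $c/n$; lets $y^t$ be an offspring maximizing $f^t$ (ties broken uniformly at random); sets $\lambda^{t+1}=\max\{1,\lambda^t/F\}$ if $f^t(y^t)>f^t(x^t)$ and $\lambda^{t+1}=F^{1/s}\lambda^t$ otherwise; and sets $x^{t+1}=y^t$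 (even if worse). The number of generations is the first $T$ with $x^T=(1,\dots,1)$; the number of function evaluations is $\sum_{t<T}\lfloor\lambda^t\rceil$. $Z^t$ denotes the number of zero-bits of $x^t$. *)

theory Defs
  imports "HOL-Probability.Probability"
begin

text \<open>Search points are bool lists of length n (True = one-bit).
  A history records, for each past generation, the parent, the offspring
  population parameter lambda and the list of offspring created.\<close>

type_synonym hist = "(bool list \<times> real \<times> bool list list) list"
type_synonym adversary = "hist \<Rightarrow> bool list \<Rightarrow> real \<Rightarrow> (bool list \<Rightarrow> real)"

definition strictly_monotone :: "nat \<Rightarrow> (bool list \<Rightarrow> real) \<Rightarrow> bool" where
  "strictly_monotone n f \<longleftrightarrow>
     (\<forall>x y. length x = n \<longrightarrow> length y = n \<longrightarrow> x \<noteq> y \<longrightarrow>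
        (\<forall>i<n. y ! i \<le> x ! i) \<longrightarrow> f y < f x)"

text \<open>A dynamic monotone function: the adversary picks f^t depending on the run so far
  (history of parents, lambdas and offspring) and the current x^t, lambda^t.\<close>
definition dyn_monotone :: "nat \<Rightarrow> adversary \<Rightarrow> bool" where
  "dyn_monotone n adv \<longleftrightarrow> (\<forall>h x l. strictly_monotone n (adv h x l))"

definition zeros :: "bool list \<Rightarrow> nat" where
  "zeros x = length (filter Not x)"

primrec mutate :: "real \<Rightarrow> bool list \<Rightarrow> bool list pmf" where
  "mutate p [] = return_pmf []"
| "mutate p (b # bs) =
     bind_pmf (bernoulli_pmf p) (\<lambda>fl. bind_pmf (mutate p bs) (\<lambda>rest. return_pmf ((b \<noteq> fl) # rest)))"

primrec offspring :: "real \<Rightarrow> nat \<Rightarrow> bool list \<Rightarrow> bool list list pmf" where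
  "offspring p 0 x = return_pmf []"
| "offspring p (Suc k) x =
     bind_pmf (mutate p x) (\<lambda>y. bind_pmf (offspring p k x) (\<lambda>ys. return_pmf (y # ys)))"

text \<open>Indices of the best offspring (ties broken uniformly among offspring).\<close>
definition best_idx :: "(bool list \<Rightarrow> real) \<Rightarrow> bool list list \<Rightarrow> nat set" where
  "best_idx f ys = {i. i < length ys \<and> (\<forall>j<length ys. f (ys ! j) \<le> f (ys ! i))}"

definition lambda_update :: "real \<Rightarrow> real \<Rightarrow> bool \<Rightarrow> real \<Rightarrow> real" where
  "lambda_update s F success l = (if success then max 1 (l / F) else F powr (1 / s) * l)"

text \<open>\<open>reach n c s F adv K h x l\<close>: distribution of the event "the all-ones string is
  reached within K further generations", started in state (x,l) with history h,
  for the SA-(1,lambda)-EA with success ratio s, update strength F and mutation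
  rate c/n, against adversary adv.\<close>
primrec reach :: "nat \<Rightarrow> real \<Rightarrow> real \<Rightarrow> real \<Rightarrow> adversary \<Rightarrow> nat \<Rightarrow> hist \<Rightarrow> bool list \<Rightarrow> real \<Rightarrow> bool pmf" where
  "reach n c s F adv 0 h x l = return_pmf (x = replicate n True)"
| "reach n c s F adv (Suc K) h x l =
     (if x = replicate n True then return_pmf True
      else bind_pmf (offspring (c / real n) (nat (round l)) x) (\<lambda>ys.
             bind_pmf (pmf_of_set (best_idx (adv h x l) ys)) (\<lambda>i.
               reach n c s F adv K (h @ [(x, l, ys)]) (ys ! i)
                 (lambda_update s F (adv h x l (ys ! i) > adv h x l x) l))))"

definition prob_T_le :: "nat \<Rightarrow> real \<Rightarrow> real \<Rightarrow> real \<Rightarrow> adversary \<Rightarrow> bool list \<Rightarrow> nat \<Rightarrow> real" where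
  "prob_T_le n c s F adv x0 K = measure_pmf.prob (reach n c s F adv K [] x0 1) {True}"

end

theory Submission
  imports Defs
begin


definition W :: "(bool \<Rightarrow> bool \<Rightarrow> real) \<Rightarrow> bool list \<Rightarrow> bool list \<Rightarrow> real" where
  "W w x y = prod_list (map (\<lambda>(a,b). w a b) (zip x y))"

lemma W_Nil[simp]: "W w [] y = 1" by (simp add: W_def)
lemma W_Cons[simp]: "W w (a#x) (b#y) = w a b * W w x y" by (simp add: W_def)

lemma W_nonneg: "(\<And>a b. 0 \<le> w a b) \<Longrightarrow> 0 \<le> W w x y"
  unfolding W_def by (rule prod_list_nonneg) auto

lemma mutate_len: "y \<in> set_pmf (mutate p x) \<Longrightarrow> length y = length x"
  by (induction x arbitrary: y) auto

lemma offspring_set: "ys \<in> set_pmf (offspring p k x) \<Longrightarrow> length ys = k \<and> (\<forall>y\<in>set ys. y \<in> set_pmf (mutate p x))"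
  by (induction k arbitrary: ys) auto

lemma mutate_W:
  assumes p: "0 \<le> p" "p \<le> 1" and w: "\<And>a b. 0 \<le> w a b"
  shows "(\<integral>\<^sup>+y. ennreal (W w x y) \<partial>mutate p x) = ennreal (prod_list (map (\<lambda>a. (1-p) * w a a + p * w a (\<not>a)) x))"
proof (induction x)
  case Nil
  then show ?case by simp
next
  case (Cons b bs)
  have "(\<integral>\<^sup>+y. ennreal (W w (b#bs) y) \<partial>mutate p (b#bs))
      = (\<integral>\<^sup>+fl. ennreal (w b (b \<noteq> fl)) * (\<integral>\<^sup>+rest. ennreal (W w bs rest) \<partial>mutate p bs) \<partial>bernoulli_pmf p)"
    by (simp add: ennreal_mult' W_nonneg w nn_integral_cmult)
  also have "\<dots> = (\<integral>\<^sup>+fl. ennreal (w b (b \<noteq> fl) * prod_list (map (\<lambda>a. (1-p) * w a a + p * w a (\<not>a)) bs)) \<partial>bernoulli_pmf p)"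
    by (simp add: Cons ennreal_mult' w)
  also have "\<dots> = ennreal (prod_list (map (\<lambda>a. (1-p) * w a a + p * w a (\<not>a)) (b#bs)))"
  proof -
    define P where "P = prod_list (map (\<lambda>a. (1-p) * w a a + p * w a (\<not>a)) bs)"
    have P0: "0 \<le> P" unfolding P_def using p w by (intro prod_list_nonneg) (auto intro!: add_nonneg_nonneg mult_nonneg_nonneg)
    have "(\<integral>\<^sup>+fl. ennreal (w b (b \<noteq> fl) * P) \<partial>bernoulli_pmf p) = ennreal (w b (\<not> b) * P) * ennreal p + ennreal (w b b * P) * ennreal (1-p)"
      using p w P0 by simp
    also have "\<dots> = ennreal (w b (\<not> b) * P * p + w b b * P * (1-p))"
      using p w P0 by (subst ennreal_plus) (auto simp: ennreal_mult)
    also have "\<dots> = ennreal (((1-p) * w b b + p * w b (\<not>b)) * P)"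
      by (simp add: algebra_simps)
    finally show ?thesis by (simp add: P_def)
  qed
  finally show ?case .
qed

lemma offspring_prod:
  assumes phi: "\<And>y. 0 \<le> \<phi> y"
  shows "(\<integral>\<^sup>+ys. ennreal (prod_list (map \<phi> ys)) \<partial>offspring p k x) = (\<integral>\<^sup>+y. ennreal (\<phi> y) \<partial>mutate p x) ^ k"
proof (induction k)
  case 0
  then show ?case by simp
next
  case (Suc k)
  have "(\<integral>\<^sup>+ys. ennreal (prod_list (map \<phi> ys)) \<partial>offspring p (Suc k) x)
     = (\<integral>\<^sup>+y. ennreal (\<phi> y) * (\<integral>\<^sup>+ys. ennreal (prod_list (map \<phi> ys)) \<partial>offspring p k x) \<partial>mutate p x)"
    by (simp add: ennreal_mult' phi prod_list_nonneg nn_integral_cmult)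
  also have "\<dots> = (\<integral>\<^sup>+y. ennreal (\<phi> y) \<partial>mutate p x) * (\<integral>\<^sup>+y. ennreal (\<phi> y) \<partial>mutate p x) ^ k"
    by (simp add: Suc nn_integral_multc)
  finally show ?case by simp
qed

lemma zeros_Nil[simp]: "zeros [] = 0" and zeros_Cons[simp]: "zeros (b#y) = (if b then 0 else 1) + zeros y"
  by (auto simp: zeros_def)

lemma zeros_le: "zeros x \<le> length x"
  by (simp add: zeros_def)

lemma prod_map_bool: "prod_list (map (g::bool\<Rightarrow>real) x) = g False ^ zeros x * g True ^ (length x - zeros x)"
proof (induction x)
  case Nil then show ?case by simp
next
  case (Cons b x)
  have "zeros x \<le> length x" by (rule zeros_le)
  with Cons show ?case by (cases b) (auto simp: Suc_diff_le algebra_simps)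
qed

lemma W_zeros: "length y = length x \<Longrightarrow> W (\<lambda>a b. if b then 1 else exp (-\<eta>)) x y = exp (-\<eta> * real (zeros y))"
proof (induction x arbitrary: y)
  case Nil then show ?case by simp
next
  case (Cons a x)
  then obtain b y' where y: "y = b # y'" by (cases y) auto
  with Cons show ?case by (auto simp: algebra_simps mult_exp_exp)
qed

lemma W_le:
  assumes "length y = length x" and "\<And>a b. 0 \<le> f a b" "\<And>a b. f a b \<le> g a * h a b" "\<And>a b. 0 \<le> h a b"
  shows "W f x y \<le> prod_list (map g x) * W h x y"
  using assms(1)
proof (induction x arbitrary: y)
  case Nil then show ?case by simp
next
  case (Cons a x)
  then obtain b y' where y: "y = b # y'" by (cases y) auto
  have "W f (a#x) y = f a b * W f x y'" by (simp add: y)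
  also have "\<dots> \<le> (g a * h a b) * (prod_list (map g x) * W h x y')"
    using Cons y assms by (intro mult_mono W_nonneg) (auto intro: order_trans[OF assms(2) assms(3)])
  finally show ?case by (simp add: y algebra_simps)
qed

lemma prod_list_ge1: "(\<And>v. v \<in> set vs \<Longrightarrow> (1::real) \<le> v) \<Longrightarrow> 1 \<le> prod_list vs"
proof (induction vs)
  case Nil then show ?case by simp
next
  case (Cons v vs)
  then have "1 * 1 \<le> v * prod_list vs" by (intro mult_mono) (auto intro: order_trans[OF zero_le_one])
  then show ?case by simp
qed

lemma W_ge1: "(\<And>a b. 1 \<le> h a b) \<Longrightarrow> 1 \<le> W h x y"
  unfolding W_def by (rule prod_list_ge1) auto

lemma prod_list_elem_le:
  assumes "y \<in> set ys" "\<And>v. v \<in> set ys \<Longrightarrow> (1::real) \<le> \<phi> v"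
  shows "\<phi> y \<le> prod_list (map \<phi> ys)"
  using assms
proof (induction ys)
  case Nil then show ?case by simp
next
  case (Cons v vs)
  have g: "1 \<le> prod_list (map \<phi> vs)" using Cons.prems by (intro prod_list_ge1) auto
  show ?case
  proof (cases "y = v")
    case True
    then have "\<phi> y * 1 \<le> \<phi> v * prod_list (map \<phi> vs)" using g Cons.prems by (intro mult_mono) (auto intro: order_trans[OF zero_le_one])
    then show ?thesis by simp
  next
    case False
    then have "1 * \<phi> y \<le> \<phi> v * prod_list (map \<phi> vs)" using Cons by (intro mult_mono) (auto intro: order_trans[OF zero_le_one])
    then show ?thesis by simp
  qed
qed

lemma W_01:
  assumes "length y = length x" "\<And>a b. w a b = 0 \<or> w a b = 1"
  shows "W w x y = (if list_all2 (\<lambda>a b. w a b = 1) x y then 1 else 0)"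
  using assms(1)
proof (induction x arbitrary: y)
  case Nil then show ?case by simp
next
  case (Cons a x)
  then obtain b y' where y: "y = b # y'" by (cases y) auto
  with Cons assms(2)[of a b] show ?case by auto
qed

lemma best_idx_ne:
  assumes "ys \<noteq> []" shows "best_idx f ys \<noteq> {}" "finite (best_idx f ys)"
proof -
  have "finite (f ` set ys)" "f ` set ys \<noteq> {}" using assms by auto
  then have "Max (f ` set ys) \<in> f ` set ys" by (rule Max_in)
  then obtain i where i: "i < length ys" "f (ys ! i) = Max (f ` set ys)" by (auto simp: in_set_conv_nth)
  have "\<forall>j<length ys. f (ys ! j) \<le> f (ys ! i)" using i by (auto intro!: Max_ge)
  with i show "best_idx f ys \<noteq> {}" by (auto simp: best_idx_def)
  show "finite (best_idx f ys)" by (rule finite_subset[of _ "{..<length ys}"]) (auto simp: best_idx_def)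
qed




lemma exp_pow_bound: "0 \<le> A \<Longrightarrow> A \<le> exp a \<Longrightarrow> A ^ k \<le> exp (a * real k)"
  by (metis exp_of_nat2_mult mult.commute power_mono)

lemma RL1:
  fixes l Fs F \<kappa> \<mu> q0 m A Bq :: real and k :: nat
  assumes l: "3/2 \<le> l" and k1: "l - 1/2 \<le> real k" and k2: "real k \<le> l + 1/2"
    and q0: "0 < q0" "q0 < 1" and F: "1 < F" and mu: "\<mu> = min (1/3) (1 - 1/F)"
    and m: "m = - ln (1 - exp (-q0/6))" and kap: "\<kappa> * \<mu> = q0 + m" "0 < \<kappa>"
    and A: "0 \<le> A" "A \<le> 1 + q0/2" and B: "0 \<le> Bq" "Bq \<le> 1 - q0/2"
    and Fs: "\<kappa> * (Fs - 1) \<le> q0/6"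
  shows "exp (\<kappa> * (max 1 (l/F) - l)) * A ^ k + exp (\<kappa> * (Fs - 1) * l) * Bq ^ k \<le> 1"
proof -
  have e6: "0 < exp (-q0/6)" "exp (-q0/6) < 1" using q0 by auto
  have em: "exp (-m) = 1 - exp (-q0/6)" using e6 by (simp add: m)
  have m0: "0 < m" using e6 m by simp
  have a: "max 1 (l/F) - l \<le> - \<mu> * l"
  proof (cases "1 \<le> l/F")
    case True
    have "l/F - l = - (1 - 1/F) * l" by (simp add: algebra_simps)
    moreover have "\<mu> \<le> 1 - 1/F" using mu by linarith
    then have "\<mu> * l \<le> (1 - 1/F) * l" using l by (intro mult_right_mono) auto
    ultimately show ?thesis using True by (simp add: algebra_simps)
  next
    case False
    have "\<mu> \<le> 1/3" using mu by linarith
    then have "\<mu> * l \<le> (1/3) * l" using l by (intro mult_right_mono) auto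
    moreover have "max 1 (l/F) = 1" using False by simp
    ultimately show ?thesis using l by linarith
  qed
  have A1: "A \<le> exp (q0/2)" using A(2) exp_ge_add_one_self[of "q0/2"] by linarith
  have "A ^ k \<le> exp (q0/2 * real k)" by (rule exp_pow_bound[OF A(1) A1])
  also have "\<dots> \<le> exp (q0 * l)"
  proof -
    have "q0/2 * real k \<le> q0/2 * (l + 1/2)" using k2 q0 by (intro mult_left_mono) auto
    also have "\<dots> \<le> q0 * l"
    proof -
      have "q0 * (3/2) \<le> q0 * l" using q0 l by (intro mult_left_mono) auto
      moreover have "q0/2 * (l + 1/2) = (q0 * l)/2 + q0/4" by (simp add: algebra_simps)
      ultimately show ?thesis using q0 by linarith
    qed
    finally show ?thesis by simp
  qed
  finally have Ak: "A ^ k \<le> exp (q0 * l)" .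
  have "\<kappa> * (max 1 (l/F) - l) \<le> \<kappa> * (- \<mu> * l)" using a kap by (intro mult_left_mono) auto
  then have a2: "\<kappa> * (max 1 (l/F) - l) \<le> -\<kappa>*\<mu>*l" by simp
  have t1: "exp (\<kappa> * (max 1 (l/F) - l)) * A ^ k \<le> exp (-\<kappa>*\<mu>*l) * exp (q0 * l)"
    using a2 Ak A by (intro mult_mono) auto
  also have "\<dots> = exp (- m * l)" by (simp add: kap mult_exp_exp algebra_simps)
  also have "\<dots> \<le> exp (-m)"
  proof -
    have "m * 1 \<le> m * l" using m0 l by (intro mult_left_mono) auto
    then show ?thesis by simp
  qed
  finally have T1: "exp (\<kappa> * (max 1 (l/F) - l)) * A ^ k \<le> 1 - exp (-q0/6)" using em by simp
  have B1: "Bq \<le> exp (-q0/2)" using B(2) exp_ge_add_one_self[of "-q0/2"] by linarith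
  have "Bq ^ k \<le> exp (-q0/2 * real k)" by (rule exp_pow_bound[OF B(1) B1])
  also have "\<dots> \<le> exp (-q0/2 * (l - 1/2))"
  proof -
    have "q0/2 * (l - 1/2) \<le> q0/2 * real k" using k1 q0 by (intro mult_left_mono) auto
    then show ?thesis by simp
  qed
  finally have Bk: "Bq ^ k \<le> exp (-q0/2 * (l - 1/2))" .
  have "\<kappa> * (Fs - 1) * l \<le> q0/6 * l" using Fs l by (intro mult_right_mono) auto
  then have "exp (\<kappa> * (Fs - 1) * l) * Bq ^ k \<le> exp (q0/6 * l) * exp (-q0/2 * (l - 1/2))"
    using Bk B by (intro mult_mono) auto
  also have "\<dots> = exp (q0/6 * l - q0/2 * (l - 1/2))" by (simp add: mult_exp_exp)
  also have "\<dots> \<le> exp (-q0/6)"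
  proof -
    have "q0 * l \<ge> q0 * (3/2)" using q0 l by (intro mult_left_mono) auto
    moreover have "q0/6 * l - q0/2 * (l - 1/2) = q0/4 - (q0*l)/3" by (simp add: algebra_simps)
    ultimately have "q0/6 * l - q0/2 * (l - 1/2) \<le> -q0/6" using q0 by linarith
    then show ?thesis by simp
  qed
  finally show ?thesis using T1 by simp
qed

lemma exp_neg_le: "0 \<le> (x::real) \<Longrightarrow> exp (-x) \<le> 1 - x + x^2"
proof -
  assume x: "0 \<le> x"
  have "1 + x \<le> exp x" by (rule exp_ge_add_one_self)
  then have "exp (-x) * (1 + x) \<le> exp (-x) * exp x" by (intro mult_left_mono) auto
  then have e: "exp (-x) * (1 + x) \<le> 1" by (simp add: mult_exp_exp)
  have "(1 - x + x^2) * (1 + x) = 1 + x^3" by (simp add: algebra_simps power2_eq_square power3_eq_cube)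
  then have "1 \<le> (1 - x + x^2) * (1 + x)" using x by simp
  with e have "exp (-x) * (1 + x) \<le> (1 - x + x^2) * (1 + x)" by linarith
  then show ?thesis using x by (simp add: mult_le_cancel_right)
qed

lemma one_minus_ge_exp: "0 \<le> (p::real) \<Longrightarrow> p \<le> 1/2 \<Longrightarrow> exp (-2*p) \<le> 1 - p"
proof -
  assume p: "0 \<le> p" "p \<le> 1/2"
  have "1 + 2*p \<le> exp (2*p)" by (rule exp_ge_add_one_self)
  then have "exp (-2*p) * (1 + 2*p) \<le> exp (-2*p) * exp (2*p)" by (intro mult_left_mono) auto
  then have e: "exp (-2*p) * (1 + 2*p) \<le> 1" by (simp add: mult_exp_exp)
  have "p * (2*p) \<le> p * 1" using p by (intro mult_left_mono) auto
  then have "1 \<le> (1 - p) * (1 + 2*p)" using p by (simp add: algebra_simps)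
  with e have "exp (-2*p) * (1 + 2*p) \<le> (1 - p) * (1 + 2*p)" by linarith
  then show ?thesis using p by (simp add: mult_le_cancel_right)
qed

lemma RL2:
  fixes n z :: nat and p c \<eta> \<tau> :: real
  assumes n: "0 < n" and z: "3 * z \<le> n" and p: "p = c / real n" and c: "0 < c" "c \<le> 1"
    and eta: "0 < \<eta>" "\<eta> \<le> 1/6" and tau: "\<tau> \<le> c * \<eta> / 6"
  shows "((1-p) * exp (-\<eta>) + p * 1) ^ z * ((1-p) * 1 + p * exp (-\<eta>)) ^ (n - z) * exp \<tau> \<le> exp (-\<eta> * real z)"
proof -
  define a where "a = exp \<eta> - 1"
  define b where "b = 1 - exp (-\<eta>)"
  have pn: "p * real n = c" using n p by simp
  have n1: "1 \<le> real n" using n by simp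
  have p0: "0 \<le> p" "p \<le> 1"
  proof -
    show "0 \<le> p" using p c by simp
    have "c / real n \<le> c / 1" using n1 c by (intro divide_left_mono) auto
    then show "p \<le> 1" using p c by simp
  qed
  have a1: "a \<le> \<eta> + \<eta>^2" using exp_bound[of \<eta>] eta by (simp add: a_def)
  have a0: "0 \<le> a" using eta by (simp add: a_def)
  have b1: "\<eta> - \<eta>^2 \<le> b" using exp_neg_le[of \<eta>] eta by (simp add: b_def)
  have b0: "b \<le> 1" by (simp add: b_def)
  have gF: "(1-p) * exp (-\<eta>) + p * 1 = exp (-\<eta>) * (1 + p * a)"
    by (simp add: a_def algebra_simps exp_minus_inverse)
  have gF1: "(1-p) * exp (-\<eta>) + p * 1 \<le> exp (-\<eta> + p * a)"
    unfolding gF exp_add using exp_ge_add_one_self[of "p*a"] by (intro mult_left_mono) auto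
  have gF0: "0 \<le> (1-p) * exp (-\<eta>) + p * 1" using p0 by simp
  have gT: "(1-p) * 1 + p * exp (-\<eta>) = 1 - p * b" by (simp add: b_def algebra_simps)
  have gT1: "(1-p) * 1 + p * exp (-\<eta>) \<le> exp (- (p * b))" unfolding gT using exp_ge_add_one_self[of "-(p*b)"] by linarith
  have gT0: "0 \<le> (1-p) * 1 + p * exp (-\<eta>)" using p0 by simp
  have P1: "((1-p) * exp (-\<eta>) + p * 1) ^ z \<le> exp ((-\<eta> + p * a) * real z)"
    by (rule exp_pow_bound[OF gF0 gF1])
  have P2: "((1-p) * 1 + p * exp (-\<eta>)) ^ (n - z) \<le> exp (- (p * b) * real (n - z))"
    by (rule exp_pow_bound[OF gT0 gT1])
  have key: "p * a * real z - p * b * real (n - z) + \<tau> \<le> 0"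
  proof -
    have nz: "real (n - z) = real n - real z" using z by simp
    have "p * a * real z \<le> p * (\<eta> + \<eta>^2) * real z" using a1 p0 by (intro mult_right_mono mult_left_mono) auto
    moreover have "p * (\<eta> - \<eta>^2) * real (n - z) \<le> p * b * real (n - z)" using b1 p0 by (intro mult_right_mono mult_left_mono) auto
    moreover have "p * real z \<le> c / 3"
    proof -
      have "3 * real z \<le> real n" using z by linarith
      then have "p * (3 * real z) \<le> p * real n" using p0 by (intro mult_left_mono) auto
      then show ?thesis using pn by simp
    qed
    moreover have "\<eta>^2 \<le> \<eta> / 6"
    proof -
      have "\<eta> * \<eta> \<le> \<eta> * (1/6)" using eta by (intro mult_left_mono) auto
      then show ?thesis by (simp add: power2_eq_square)
    qed
    moreover have "p * (\<eta> + \<eta>^2) * real z - p * (\<eta> - \<eta>^2) * real (n - z) = 2 * \<eta> * (p * real z) - \<eta> * (p * real n) + \<eta>^2 * (p * real n)"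
      unfolding nz by (simp add: algebra_simps power2_eq_square)
    moreover have "2 * \<eta> * (p * real z) \<le> 2 * \<eta> * (c/3)" using eta \<open>p * real z \<le> c / 3\<close> by (intro mult_left_mono) auto
    moreover have "\<eta>^2 * c \<le> \<eta> / 6 * c" using \<open>\<eta>^2 \<le> \<eta> / 6\<close> c by (intro mult_right_mono) auto
    ultimately show ?thesis using tau pn by (simp add: algebra_simps)
  qed
  have "((1-p) * exp (-\<eta>) + p * 1) ^ z * ((1-p) * 1 + p * exp (-\<eta>)) ^ (n - z) * exp \<tau>
      \<le> exp ((-\<eta> + p * a) * real z) * exp (- (p * b) * real (n - z)) * exp \<tau>"
    using P1 P2 gF0 gT0 by (intro mult_mono mult_nonneg_nonneg zero_le_power) auto
  also have "\<dots> = exp (-\<eta> * real z + (p * a * real z - p * b * real (n - z) + \<tau>))"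
    by (simp add: mult_exp_exp algebra_simps)
  also have "\<dots> \<le> exp (-\<eta> * real z)" using key by simp
  finally show ?thesis .
qed

lemma A_bound:
  fixes p c \<eta> q0 :: real and z :: nat
  assumes p: "0 \<le> p" and pz: "p * real z \<le> c" and c: "0 < c" and eta: "0 < \<eta>" "\<eta> \<le> 1"
    and eta2: "\<eta> \<le> ln (1 + q0/2) / (2*c)" and q0: "0 < q0"
  shows "((1-p) * 1 + p * exp \<eta>) ^ z \<le> 1 + q0/2"
proof -
  define a where "a = exp \<eta> - 1"
  have a1: "a \<le> 2 * \<eta>" using exp_bound[of \<eta>] eta
  proof -
    have "\<eta> * \<eta> \<le> \<eta> * 1" using eta by (intro mult_left_mono) auto
    then have "\<eta>^2 \<le> \<eta>" by (simp add: power2_eq_square)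
    then show ?thesis using exp_bound[of \<eta>] eta by (simp add: a_def)
  qed
  have a0: "0 \<le> a" using eta by (simp add: a_def)
  have g: "(1-p) * 1 + p * exp \<eta> = 1 + p * a" by (simp add: a_def algebra_simps)
  have g0: "0 \<le> 1 + p * a" using p a0 by simp
  have "(1 + p * a) ^ z \<le> exp (p * a * real z)"
    by (rule exp_pow_bound[OF g0]) (simp add: exp_ge_add_one_self)
  also have "\<dots> \<le> exp (2 * c * \<eta>)"
  proof -
    have "p * a * real z = a * (p * real z)" by simp
    also have "\<dots> \<le> a * c" using pz a0 by (intro mult_left_mono) auto
    also have "\<dots> \<le> (2 * \<eta>) * c" using a1 c by (intro mult_right_mono) auto
    finally show ?thesis by (simp add: algebra_simps)
  qed
  also have "\<dots> \<le> exp (ln (1 + q0/2))"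
  proof -
    have "2 * c * \<eta> \<le> 2 * c * (ln (1 + q0/2) / (2*c))" using eta2 c by (intro mult_left_mono) auto
    then show ?thesis using c by simp
  qed
  also have "\<dots> = 1 + q0/2" using q0 by simp
  finally show ?thesis unfolding g .
qed

lemma q_bound:
  fixes p c \<epsilon> :: real and z n :: nat
  assumes n: "2 \<le> n" and p: "p = c / real n" and c: "0 < c" "c \<le> 1" and z: "z \<le> n"
    and zz: "\<epsilon> * real n / 2 < real z" and e: "0 < \<epsilon>"
  shows "exp (-2*c) * (1 - exp (-c*\<epsilon>/2)) \<le> (1-p)^(n-z) * (1 - (1-p)^z)"
proof -
  have pn: "p * real n = c" using n p by simp
  have p0: "0 \<le> p" using p c by simp
  have p2: "p \<le> 1/2"
  proof -
    have "c / real n \<le> 1 / 2" using n c by (simp add: field_simps)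
    then show ?thesis using p by simp
  qed
  have h1: "exp (-2*c) \<le> (1-p)^n"
  proof -
    have "exp (-2*p) ^ n \<le> (1-p)^n" using one_minus_ge_exp[OF p0 p2] by (intro power_mono) auto
    moreover have "exp (-2*p) ^ n = exp (-2*c)" using pn by (simp add: exp_of_nat2_mult[symmetric] algebra_simps)
    ultimately show ?thesis by simp
  qed
  have h2: "(1-p)^n \<le> (1-p)^(n-z)" using p0 p2 z by (intro power_decreasing) auto
  have h3: "(1-p)^z \<le> exp (-c*\<epsilon>/2)"
  proof -
    have "(1-p)^z \<le> exp (-p) ^ z" using p0 p2 exp_ge_add_one_self[of "-p"] by (intro power_mono) auto
    also have "\<dots> = exp (- (p * real z))" by (simp add: exp_of_nat2_mult[symmetric] algebra_simps)
    also have "\<dots> \<le> exp (-c*\<epsilon>/2)"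
    proof -
      have "p * (\<epsilon> * real n / 2) \<le> p * real z" using zz p0 by (intro mult_left_mono) auto
      then show ?thesis using pn by (simp add: algebra_simps)
    qed
    finally show ?thesis .
  qed
  have "exp (-2*c) * (1 - exp (-c*\<epsilon>/2)) \<le> (1-p)^(n-z) * (1 - (1-p)^z)"
    using h1 h2 h3 p0 p2 c e by (intro mult_mono) auto
  then show ?thesis .
qed




definition wz :: "real \<Rightarrow> bool \<Rightarrow> bool \<Rightarrow> real" where "wz \<eta> a b = (if b then 1 else exp (-\<eta>))"
definition wY :: "real \<Rightarrow> bool \<Rightarrow> bool \<Rightarrow> real" where "wY \<eta> a b = (if \<not>a \<and> b then exp \<eta> else 1)"
definition wD :: "bool \<Rightarrow> bool \<Rightarrow> real" where "wD a b = (if a \<and> \<not>b then 0 else 1)"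
definition wE :: "bool \<Rightarrow> bool \<Rightarrow> real" where "wE a b = (if a = b then 1 else 0)"
definition ND :: "bool list \<Rightarrow> bool list \<Rightarrow> real" where
  "ND x y = (if W wD x y = 1 \<and> W wE x y = 0 then 0 else 1)"
definition Phi :: "real \<Rightarrow> real \<Rightarrow> real \<Rightarrow> nat \<Rightarrow> real \<Rightarrow> real" where
  "Phi \<eta> \<kappa> z2 z l = exp (\<eta> * (z2 - real z) + \<kappa> * l)"

lemma Wz_eq: "length y = length x \<Longrightarrow> W (wz \<eta>) x y = exp (-\<eta> * real (zeros y))"
  unfolding wz_def by (rule W_zeros)

lemma WY_ge1: "0 \<le> \<eta> \<Longrightarrow> 1 \<le> W (wY \<eta>) x y"
  by (rule W_ge1) (auto simp: wY_def)

lemma Wz_le: "length y = length x \<Longrightarrow> 0 \<le> \<eta> \<Longrightarrow> W (wz \<eta>) x y \<le> exp (-\<eta> * real (zeros x)) * W (wY \<eta>) x y"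
proof -
  assume l: "length y = length x" and e: "0 \<le> \<eta>"
  have "W (wz \<eta>) x y \<le> prod_list (map (\<lambda>a. wz \<eta> a a) x) * W (wY \<eta>) x y"
    using l by (rule W_le) (use e in \<open>auto simp: wz_def wY_def mult_exp_exp\<close>)
  also have "prod_list (map (\<lambda>a. wz \<eta> a a) x) = exp (-\<eta> * real (zeros x))"
    proof -
    have "prod_list (map (\<lambda>a. wz \<eta> a a) x) = exp (-\<eta>) ^ zeros x" by (simp add: prod_map_bool wz_def)
    also have "\<dots> = exp (-\<eta> * real (zeros x))" by (simp add: exp_of_nat_mult[symmetric] mult.commute)
    finally show ?thesis .
  qed
  finally show ?thesis .
qed

lemma WD_iff: "length y = length x \<Longrightarrow> W wD x y = (if (\<forall>i<length x. x!i \<le> y!i) then 1 else 0)"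
  by (subst W_01) (auto simp: wD_def list_all2_conv_all_nth le_bool_def)

lemma WE_iff: "length y = length x \<Longrightarrow> W wE x y = (if x = y then 1 else 0)"
  by (subst W_01) (auto simp: wE_def list_all2_conv_all_nth list_eq_iff_nth_eq)

lemma ND_pointwise:
  assumes "length y = length x" "0 \<le> \<eta>"
  shows "ND x y * W (wY \<eta>) x y + W wD x y \<le> W (wY \<eta>) x y + W wE x y"
proof -
  have Y: "1 \<le> W (wY \<eta>) x y" using WY_ge1[OF assms(2)] .
  show ?thesis
  proof (cases "x = y")
    case True
    then show ?thesis using WD_iff[OF assms(1)] WE_iff[OF assms(1)] by (simp add: ND_def)
  next
    case False
    show ?thesis
    proof (cases "\<forall>i<length x. x!i \<le> y!i")
      case True
      then show ?thesis using False Y WD_iff[OF assms(1)] WE_iff[OF assms(1)] by (simp add: ND_def)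
    next
      case F2: False
      then show ?thesis using False Y WD_iff[OF assms(1)] WE_iff[OF assms(1)] by (simp add: ND_def)
    qed
  qed
qed

lemma ND_01: "ND x y = 0 \<or> ND x y = 1" by (simp add: ND_def)

lemma ND_zero_dom:
  assumes "length y = length x" "ND x y = 0"
  shows "y \<noteq> x \<and> (\<forall>i<length x. x!i \<le> y!i)"
proof -
  have "W wD x y = 1" "W wE x y = 0" using assms(2) ND_01[of x y] by (auto simp: ND_def split: if_splits)
  then show ?thesis using WD_iff[OF assms(1)] WE_iff[OF assms(1)] by (auto split: if_splits)
qed




lemma nested_bound:
  assumes S: "\<And>ys. ys \<in> set_pmf M \<Longrightarrow> S ys \<noteq> {} \<and> finite (S ys)"
    and g: "\<And>ys i. ys \<in> set_pmf M \<Longrightarrow> i \<in> S ys \<Longrightarrow> g ys i \<le> B ys"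
  shows "(\<integral>\<^sup>+ys. \<integral>\<^sup>+i. ennreal (g ys i) \<partial>pmf_of_set (S ys) \<partial>M) \<le> (\<integral>\<^sup>+ys. ennreal (B ys) \<partial>M)"
proof (rule nn_integral_mono_AE)
  show "AE ys in measure_pmf M. (\<integral>\<^sup>+i. ennreal (g ys i) \<partial>pmf_of_set (S ys)) \<le> ennreal (B ys)"
    unfolding AE_measure_pmf_iff
  proof (intro ballI)
    fix ys assume ys: "ys \<in> set_pmf M"
    have "(\<integral>\<^sup>+i. ennreal (g ys i) \<partial>pmf_of_set (S ys)) \<le> (\<integral>\<^sup>+i. ennreal (B ys) \<partial>pmf_of_set (S ys))"
      using S[OF ys] g[OF ys] by (intro nn_integral_mono_AE) (auto simp: AE_measure_pmf_iff ennreal_leI)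
    also have "\<dots> = ennreal (B ys)" by (simp add: measure_pmf.emeasure_space_1)
    finally show "(\<integral>\<^sup>+i. ennreal (g ys i) \<partial>pmf_of_set (S ys)) \<le> ennreal (B ys)" .
  qed
qed

lemma nn_integral_cmult_real:
  assumes "0 \<le> C" "\<And>y. 0 \<le> X y"
  shows "(\<integral>\<^sup>+y. ennreal (C * X y) \<partial>measure_pmf M) = ennreal C * (\<integral>\<^sup>+y. ennreal (X y) \<partial>measure_pmf M)"
  using assms by (simp add: ennreal_mult nn_integral_cmult)

lemma nested_mono:
  assumes "\<And>ys i. ys \<in> set_pmf M \<Longrightarrow> i \<in> set_pmf (N ys) \<Longrightarrow> g ys i \<le> h ys i"
  shows "(\<integral>\<^sup>+ys. \<integral>\<^sup>+i. g ys i \<partial>N ys \<partial>M) \<le> (\<integral>\<^sup>+ys. \<integral>\<^sup>+i. h ys i \<partial>N ys \<partial>M)"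
  using assms by (intro nn_integral_mono_AE) (auto simp: AE_measure_pmf_iff intro!: nn_integral_mono_AE)

lemma nested_add_const:
  "(\<integral>\<^sup>+ys. \<integral>\<^sup>+i. (g ys i + C) \<partial>measure_pmf (N ys) \<partial>measure_pmf M) = (\<integral>\<^sup>+ys. \<integral>\<^sup>+i. g ys i \<partial>N ys \<partial>M) + C"
  by (simp add: nn_integral_add measure_pmf.emeasure_space_1)

locale setting =
  fixes c F s \<epsilon> \<eta> \<kappa> q0 \<mu> m :: real
  assumes c: "0 < c" "c \<le> 1" and F: "1 < F" and s: "0 < s"
    and eps: "0 < \<epsilon>" "\<epsilon> \<le> 1/3"
    and q0: "q0 = exp (-2*c) * (1 - exp (-c*\<epsilon>/2))"
    and eta: "0 < \<eta>" "\<eta> \<le> 1/6" "\<eta> \<le> ln (1 + q0/2) / (2*c)"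
    and mu: "\<mu> = min (1/3) (1 - 1/F)" and m: "m = - ln (1 - exp (-q0/6))"
    and kap: "\<kappa> * \<mu> = q0 + m" "0 < \<kappa>"
    and Fs: "\<kappa> * (F powr (1/s) - 1) \<le> q0/6" "\<kappa> * (F powr (1/s) - 1) \<le> c*\<eta>/9" "F powr (1/s) \<le> 2"
begin

lemma q0_pos: "0 < q0" "q0 < 1"
proof -
  have "0 < c*\<epsilon>" using c(1) eps(1) by (rule mult_pos_pos)
  then have "exp (-c*\<epsilon>/2) < 1" by simp
  then show "0 < q0" using q0 by simp
  have "exp (-2*c) < 1" using c by simp
  moreover have "1 - exp (-c*\<epsilon>/2) \<le> 1" by simp
  moreover have "0 \<le> 1 - exp (-c*\<epsilon>/2)" using \<open>exp (-c*\<epsilon>/2) < 1\<close> by simp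
  ultimately have "exp (-2*c) * (1 - exp (-c*\<epsilon>/2)) < 1 * 1"
    using \<open>exp (-c*\<epsilon>/2) < 1\<close> by (intro mult_less_le_imp_less) auto
  then show "q0 < 1" using q0 by simp
qed

lemma Fs_ge1: "1 \<le> F powr (1/s)"
  using F s by (simp add: ge_one_powr_ge_zero)

lemma lu_bounds:
  assumes "1 \<le> l"
  shows "1 \<le> lambda_update s F b l" "lambda_update s F b l \<le> F powr (1/s) * l"
proof -
  have Fs0: "1 \<le> F powr (1/s)" by (rule Fs_ge1)
  have "l \<le> F powr (1/s) * l" using Fs0 assms by (simp add: mult_le_cancel_right1)
  moreover have "l / F \<le> l" using F assms by (simp add: divide_le_eq)
  ultimately have "l / F \<le> F powr (1/s) * l" "l \<le> F powr (1/s) * l" by linarith+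
  moreover have "1 \<le> F powr (1/s) * l" using Fs0 assms by (metis mult_mono' mult_1 zero_le_one)
  ultimately show "lambda_update s F b l \<le> F powr (1/s) * l"
    using assms by (auto simp: lambda_update_def)
  have "1 * 1 \<le> F powr (1/s) * l" using Fs0 assms by (intro mult_mono) auto
  then show "1 \<le> lambda_update s F b l" by (auto simp: lambda_update_def)
qed

lemma real_k1:
  fixes n z :: nat and p z2 l :: real
  assumes n: "3 \<le> n" and p: "p = c / real n" and z: "z \<le> n" and z2: "z2 = \<epsilon> * real n / 2"
    and zz: "z2 < real z" and l: "1 \<le> l" "l < 3/2"
  shows "exp (\<eta>*z2 + \<kappa>*(F powr (1/s)*l)) * (((1-p)*exp(-\<eta>) + p*1)^z * ((1-p)*1 + p*exp(-\<eta>))^(n-z))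
         \<le> Phi \<eta> \<kappa> z2 z l + 2*exp(3*\<kappa>)*exp(-\<eta>*real n/6)"
proof -
  define Fs where "Fs = F powr (1/s)"
  define \<tau> where "\<tau> = \<kappa> * (Fs - 1) * l"
  have Fs1: "1 \<le> Fs" unfolding Fs_def by (rule Fs_ge1)
  have p0: "0 \<le> p" "p \<le> 1"
  proof -
    show "0 \<le> p" using p c by simp
    have "c / real n \<le> c / 1" using n c by (intro divide_left_mono) auto
    then show "p \<le> 1" using p c by simp
  qed
  have pz: "p * real z \<le> c"
  proof -
    have "p * real z \<le> p * real n" using z p0 by (intro mult_left_mono) auto
    then show ?thesis using p n by simp
  qed
  have tau: "\<tau> \<le> c * \<eta> / 6"
  proof -
    have "\<kappa> * (Fs - 1) * l \<le> (c*\<eta>/9) * (3/2)"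
      using Fs(2) l Fs1 kap c eta by (intro mult_mono) (auto simp: Fs_def)
    then show ?thesis by (simp add: \<tau>_def mult.commute)
  qed
  have split: "exp (\<eta>*z2 + \<kappa>*(Fs*l)) = exp (\<eta>*z2 + \<kappa>*l) * exp \<tau>"
    by (simp add: \<tau>_def mult_exp_exp algebra_simps)
  have gT0: "0 \<le> (1-p)*1 + p*exp(-\<eta>)" using p0 by simp
  have gF0: "0 \<le> (1-p)*exp(-\<eta>) + p*1" using p0 by simp
  show ?thesis
  proof (cases "3 * z \<le> n")
    case True
    have "((1-p)*exp(-\<eta>) + p*1)^z * ((1-p)*1 + p*exp(-\<eta>))^(n-z) * exp \<tau> \<le> exp (-\<eta> * real z)"
      using RL2[of n z p c \<eta> \<tau>] True n p c eta tau by auto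
    then have "exp (\<eta>*z2 + \<kappa>*l) * (((1-p)*exp(-\<eta>) + p*1)^z * ((1-p)*1 + p*exp(-\<eta>))^(n-z) * exp \<tau>)
        \<le> exp (\<eta>*z2 + \<kappa>*l) * exp (-\<eta> * real z)" by (intro mult_left_mono) auto
    also have "\<dots> = Phi \<eta> \<kappa> z2 z l" by (simp add: Phi_def mult_exp_exp algebra_simps)
    finally show ?thesis unfolding Fs_def[symmetric] split
      by (simp add: algebra_simps) (smt (verit) exp_gt_zero mult_pos_pos)
  next
    case False
    have A: "((1-p) * 1 + p * exp \<eta>) ^ z \<le> 1 + q0/2"
      using A_bound[OF p0(1) pz c(1) eta(1) _ eta(3) q0_pos(1)] eta by simp
    have gF: "(1-p)*exp(-\<eta>) + p*1 = exp (-\<eta>) * ((1-p) * 1 + p * exp \<eta>)"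
      by (simp add: algebra_simps exp_minus_inverse)
    have T1: "((1-p)*1 + p*exp(-\<eta>))^(n-z) \<le> 1"
    proof -
      have "p * exp (-\<eta>) \<le> p * 1" using p0 eta by (intro mult_left_mono) auto
      then show ?thesis using gT0 by (intro power_le_one) auto
    qed
    have F1: "((1-p)*exp(-\<eta>) + p*1)^z \<le> exp (-\<eta> * real z) * 2"
    proof -
      have "((1-p)*exp(-\<eta>) + p*1)^z = exp (-\<eta>) ^ z * ((1-p) * 1 + p * exp \<eta>) ^ z"
        unfolding gF by (simp add: power_mult_distrib)
      also have "exp (-\<eta>) ^ z = exp (-\<eta> * real z)" by (simp add: exp_of_nat_mult[symmetric] mult.commute)
      finally show ?thesis using A q0_pos by (simp add: mult_left_mono)
    qed
    have P: "((1-p)*exp(-\<eta>) + p*1)^z * ((1-p)*1 + p*exp(-\<eta>))^(n-z) \<le> exp (-\<eta> * real z) * 2"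
    proof -
      have "((1-p)*exp(-\<eta>) + p*1)^z * ((1-p)*1 + p*exp(-\<eta>))^(n-z) \<le> ((1-p)*exp(-\<eta>) + p*1)^z * 1"
        using T1 gF0 by (intro mult_left_mono) auto
      then show ?thesis using F1 by simp
    qed
    have FL: "\<kappa>*(Fs*l) \<le> \<kappa> * 3"
    proof -
      have "Fs * l \<le> 2 * (3/2)" using Fs(3) l Fs1 by (intro mult_mono) (auto simp: Fs_def)
      then show ?thesis using kap by (intro mult_left_mono) auto
    qed
    have zn: "\<eta>*z2 - \<eta> * real z \<le> -\<eta>*real n/6"
    proof -
      have "\<epsilon> * real n \<le> (1/3) * real n" using eps by (intro mult_right_mono) auto
      moreover have "real n < 3 * real z" using False by linarith
      ultimately have "z2 - real z \<le> - real n / 6" using z2 by linarith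
      then have "\<eta> * (z2 - real z) \<le> \<eta> * (- real n / 6)" using eta by (intro mult_left_mono) auto
      then show ?thesis by (simp add: algebra_simps)
    qed
    have "exp (\<eta>*z2 + \<kappa>*(Fs*l)) * (((1-p)*exp(-\<eta>) + p*1)^z * ((1-p)*1 + p*exp(-\<eta>))^(n-z))
       \<le> exp (\<eta>*z2 + \<kappa>*3) * (exp (-\<eta> * real z) * 2)"
      by (rule mult_mono) (use P FL gF0 gT0 in auto)
    also have "\<dots> = 2 * exp (3*\<kappa>) * exp (\<eta>*z2 - \<eta> * real z)" by (simp add: mult_exp_exp algebra_simps)
    also have "\<dots> \<le> 2 * exp (3*\<kappa>) * exp (-\<eta>*real n/6)" using zn by simp
    also have "\<dots> \<le> Phi \<eta> \<kappa> z2 z l + 2*exp(3*\<kappa>)*exp(-\<eta>*real n/6)" by (simp add: Phi_def)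
    finally show ?thesis unfolding Fs_def .
  qed
qed

lemma real_k2:
  fixes k z :: nat and l z2 A r :: real
  assumes l: "3/2 \<le> l" and k1: "l - 1/2 \<le> real k" and k2: "real k \<le> l + 1/2"
    and A: "0 \<le> A" "A \<le> 1 + q0/2" and r: "0 \<le> r" "r \<le> 1 - q0/2"
  shows "exp (\<eta>*(z2 - real z) + \<kappa>*max 1 (l/F)) * A^k + exp (\<eta>*(z2 - real z) + \<kappa>*(F powr (1/s)*l)) * r^k
         \<le> Phi \<eta> \<kappa> z2 z l"
proof -
  define E where "E = exp (\<eta>*(z2 - real z) + \<kappa>*l)"
  have R: "exp (\<kappa> * (max 1 (l/F) - l)) * A ^ k + exp (\<kappa> * (F powr (1/s) - 1) * l) * r ^ k \<le> 1"
    by (rule RL1[OF l k1 k2 q0_pos F mu m kap A r Fs(1)])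
  have e1: "exp (\<eta>*(z2 - real z) + \<kappa>*max 1 (l/F)) = E * exp (\<kappa> * (max 1 (l/F) - l))"
    by (simp add: E_def mult_exp_exp algebra_simps)
  have e2: "exp (\<eta>*(z2 - real z) + \<kappa>*(F powr (1/s)*l)) = E * exp (\<kappa> * (F powr (1/s) - 1) * l)"
    by (simp add: E_def mult_exp_exp algebra_simps)
  have "E * (exp (\<kappa> * (max 1 (l/F) - l)) * A ^ k + exp (\<kappa> * (F powr (1/s) - 1) * l) * r ^ k) \<le> E * 1"
    using R by (intro mult_left_mono) (auto simp: E_def)
  then show ?thesis unfolding e1 e2 by (simp add: Phi_def E_def algebra_simps)
qed

lemma round_bounds:
  assumes "1 \<le> l"
  shows "real (nat (round l)) \<le> l + 1/2" "l - 1/2 < real (nat (round l))" "1 \<le> nat (round l)"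
proof -
  have a: "of_int (round l) \<le> l + 1/2" "l - 1/2 < of_int (round l)"
    using of_int_round_le[of l] of_int_round_gt[of l] by auto
  have r0: "0 < round l" using a assms by linarith
  then show "real (nat (round l)) \<le> l + 1/2" "l - 1/2 < real (nat (round l))" using a by auto
  show "1 \<le> nat (round l)" using r0 by simp
qed

lemma step1:
  fixes n :: nat and adv :: adversary and h x and l :: real
  assumes n: "3 \<le> n" and len: "length x = n" and l: "1 \<le> l" and k: "nat (round l) = 1"
    and zz: "\<epsilon> * real n / 2 < real (zeros x)"
  shows "(\<integral>\<^sup>+ys. \<integral>\<^sup>+i. ennreal (Phi \<eta> \<kappa> (\<epsilon> * real n / 2) (zeros (ys!i))
            (lambda_update s F (adv h x l x < adv h x l (ys!i)) l))
          \<partial>pmf_of_set (best_idx (adv h x l) ys) \<partial>offspring (c / real n) (nat (round l)) x)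
       \<le> ennreal (Phi \<eta> \<kappa> (\<epsilon> * real n / 2) (zeros x) l + 2*exp(3*\<kappa>)*exp(-\<eta>*real n/6))"
proof -
  define p where "p = c / real n"
  define z2 where "z2 = \<epsilon> * real n / 2"
  define f where "f = adv h x l"
  define Fs where "Fs = F powr (1/s)"
  define C where "C = exp (\<eta>*z2 + \<kappa>*(Fs*l))"
  have p0: "0 \<le> p" "p \<le> 1"
  proof -
    show "0 \<le> p" using p_def c by simp
    have "c / real n \<le> c / 1" using n c by (intro divide_left_mono) auto
    then show "p \<le> 1" using p_def c by simp
  qed
  have l32: "l < 3/2" using round_bounds(2)[OF l] k by simp
  have "(\<integral>\<^sup>+ys. \<integral>\<^sup>+i. ennreal (Phi \<eta> \<kappa> z2 (zeros (ys!i)) (lambda_update s F (f x < f (ys!i)) l))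
          \<partial>pmf_of_set (best_idx f ys) \<partial>offspring p 1 x)
       \<le> (\<integral>\<^sup>+ys. ennreal (C * prod_list (map (W (wz \<eta>) x) ys)) \<partial>offspring p 1 x)"
  proof (rule nested_bound)
    fix ys assume ys: "ys \<in> set_pmf (offspring p 1 x)"
    then obtain y where y: "ys = [y]" "y \<in> set_pmf (mutate p x)"
      using offspring_set[OF ys] by (cases ys) auto
    show "best_idx f ys \<noteq> {} \<and> finite (best_idx f ys)" using best_idx_ne[of ys f] y by auto
    fix i assume i: "i \<in> best_idx f ys"
    then have i0: "i = 0" using y by (auto simp: best_idx_def)
    have ly: "length y = length x" using mutate_len[OF y(2)] .
    have L: "lambda_update s F (f x < f (ys!i)) l \<le> Fs * l" using lu_bounds(2)[OF l] by (simp add: Fs_def)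
    have "Phi \<eta> \<kappa> z2 (zeros (ys!i)) (lambda_update s F (f x < f (ys!i)) l)
        \<le> exp (\<eta>*(z2 - real (zeros y)) + \<kappa>*(Fs*l))"
      unfolding Phi_def using L kap i0 y by simp
    also have "\<dots> = C * W (wz \<eta>) x y" by (simp add: C_def Wz_eq[OF ly] mult_exp_exp algebra_simps)
    finally show "Phi \<eta> \<kappa> z2 (zeros (ys!i)) (lambda_update s F (f x < f (ys!i)) l) \<le> C * prod_list (map (W (wz \<eta>) x) ys)"
      using y by simp
  qed
  also have "\<dots> = ennreal C * (\<integral>\<^sup>+ys. ennreal (prod_list (map (W (wz \<eta>) x) ys)) \<partial>offspring p 1 x)"
    by (rule nn_integral_cmult_real) (auto simp: C_def intro!: prod_list_nonneg W_nonneg simp: wz_def)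
  also have "\<dots> = ennreal C * (\<integral>\<^sup>+y. ennreal (W (wz \<eta>) x y) \<partial>mutate p x)"
    by (subst offspring_prod) (auto intro!: W_nonneg simp: wz_def)
  also have "\<dots> = ennreal C * ennreal (prod_list (map (\<lambda>a. (1-p) * wz \<eta> a a + p * wz \<eta> a (\<not>a)) x))"
    by (subst mutate_W[OF p0]) (auto simp: wz_def)
  also have "prod_list (map (\<lambda>a. (1-p) * wz \<eta> a a + p * wz \<eta> a (\<not>a)) x)
      = ((1-p)*exp(-\<eta>) + p*1)^(zeros x) * ((1-p)*1 + p*exp(-\<eta>))^(n - zeros x)"
    by (simp add: prod_map_bool wz_def len)
  also have "ennreal C * ennreal (((1-p)*exp(-\<eta>) + p*1)^(zeros x) * ((1-p)*1 + p*exp(-\<eta>))^(n - zeros x))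
      \<le> ennreal (Phi \<eta> \<kappa> z2 (zeros x) l + 2*exp(3*\<kappa>)*exp(-\<eta>*real n/6))"
  proof -
    have "C * (((1-p)*exp(-\<eta>) + p*1)^(zeros x) * ((1-p)*1 + p*exp(-\<eta>))^(n - zeros x))
        \<le> Phi \<eta> \<kappa> z2 (zeros x) l + 2*exp(3*\<kappa>)*exp(-\<eta>*real n/6)"
      unfolding C_def Fs_def
      by (rule real_k1[OF n p_def _ z2_def _ l l32]) (use zz zeros_le[of x] len in \<open>auto simp: z2_def\<close>)
    then show ?thesis by (subst ennreal_mult'[symmetric]) (auto simp: C_def intro: ennreal_leI)
  qed
  finally show ?thesis using k by (simp add: p_def z2_def f_def)
qed

lemma step2:
  fixes n :: nat and adv :: adversary and h x and l :: real
  assumes n: "3 \<le> n" and mono: "dyn_monotone n adv" and len: "length x = n" and l: "1 \<le> l" and k: "nat (round l) \<noteq> 1"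
    and zz: "\<epsilon> * real n / 2 < real (zeros x)"
  shows "(\<integral>\<^sup>+ys. \<integral>\<^sup>+i. ennreal (Phi \<eta> \<kappa> (\<epsilon> * real n / 2) (zeros (ys!i))
            (lambda_update s F (adv h x l x < adv h x l (ys!i)) l))
          \<partial>pmf_of_set (best_idx (adv h x l) ys) \<partial>offspring (c / real n) (nat (round l)) x)
       \<le> ennreal (Phi \<eta> \<kappa> (\<epsilon> * real n / 2) (zeros x) l + 2*exp(3*\<kappa>)*exp(-\<eta>*real n/6))"
proof -
  define p where "p = c / real n"
  define z2 where "z2 = \<epsilon> * real n / 2"
  define f where "f = adv h x l"
  define Fs where "Fs = F powr (1/s)"
  define z where "z = zeros x"
  define k where "k = nat (round l)"
  define Y where "Y = W (wY \<eta>) x"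
  define NDY where "NDY = (\<lambda>y. ND x y * Y y)"
  define C1 where "C1 = exp (\<eta>*(z2 - real z) + \<kappa>*max 1 (l/F))"
  define C2 where "C2 = exp (\<eta>*(z2 - real z) + \<kappa>*(Fs*l))"
  have p0: "0 \<le> p" "p \<le> 1"
  proof -
    show "0 \<le> p" using p_def c by simp
    have "c / real n \<le> c / 1" using n c by (intro divide_left_mono) auto
    then show "p \<le> 1" using p_def c by simp
  qed
  have k2: "2 \<le> k" using round_bounds(3)[OF l] k by (simp add: k_def)
  have kb: "real k \<le> l + 1/2" "l - 1/2 \<le> real k" using round_bounds[OF l] by (auto simp: k_def)
  have l32: "3/2 \<le> l" using kb k2 by linarith
  have Y1: "\<And>y. 1 \<le> Y y" unfolding Y_def using eta by (intro WY_ge1) auto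
  have Y0: "\<And>y. 0 \<le> Y y" using Y1 by (meson order_trans zero_le_one)
  have NDY0: "\<And>y. 0 \<le> NDY y" unfolding NDY_def using Y1 ND_01 by (metis mult_nonneg_nonneg order_trans zero_le_one order_refl)
  have "(\<integral>\<^sup>+ys. \<integral>\<^sup>+i. ennreal (Phi \<eta> \<kappa> z2 (zeros (ys!i)) (lambda_update s F (f x < f (ys!i)) l))
          \<partial>pmf_of_set (best_idx f ys) \<partial>offspring p k x)
       \<le> (\<integral>\<^sup>+ys. ennreal (C1 * prod_list (map Y ys) + C2 * prod_list (map NDY ys)) \<partial>offspring p k x)"
  proof (rule nested_bound)
    fix ys assume ys: "ys \<in> set_pmf (offspring p k x)"
    have lys: "length ys = k" and ymut: "\<forall>y\<in>set ys. y \<in> set_pmf (mutate p x)" using offspring_set[OF ys] by auto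
    have ne: "ys \<noteq> []" using lys k2 by auto
    show "best_idx f ys \<noteq> {} \<and> finite (best_idx f ys)" using best_idx_ne[OF ne] by auto
    fix i assume i: "i \<in> best_idx f ys"
    have ilt: "i < length ys" and best: "\<forall>j<length ys. f (ys!j) \<le> f (ys!i)" using i by (auto simp: best_idx_def)
    define y where "y = ys ! i"
    have yin: "y \<in> set ys" using ilt by (simp add: y_def)
    have ly: "length y = length x" using mutate_len ymut yin by blast
    have PY1: "1 \<le> prod_list (map Y ys)" by (rule prod_list_ge1) (auto simp: Y1)
    have ez: "exp (-\<eta> * real (zeros y)) \<le> exp (-\<eta> * real z) * prod_list (map Y ys)"
    proof -
      have "exp (-\<eta> * real (zeros y)) = W (wz \<eta>) x y" using Wz_eq[OF ly] by simp
      also have "\<dots> \<le> exp (-\<eta> * real z) * Y y" unfolding Y_def z_def using Wz_le[OF ly] eta by auto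
      also have "\<dots> \<le> exp (-\<eta> * real z) * prod_list (map Y ys)"
        using prod_list_elem_le[OF yin, of Y] Y1 by (intro mult_left_mono) auto
      finally show ?thesis .
    qed
    have PN0: "0 \<le> prod_list (map NDY ys)" by (rule prod_list_nonneg) (auto simp: NDY0)
    have PY0: "0 \<le> prod_list (map Y ys)" using PY1 by simp
    show "Phi \<eta> \<kappa> z2 (zeros (ys!i)) (lambda_update s F (f x < f (ys!i)) l) \<le> C1 * prod_list (map Y ys) + C2 * prod_list (map NDY ys)"
    proof (cases "f x < f y")
      case True
      have "Phi \<eta> \<kappa> z2 (zeros (ys!i)) (lambda_update s F (f x < f (ys!i)) l) = exp (\<eta>*z2 + \<kappa>*max 1 (l/F)) * exp (-\<eta> * real (zeros y))"
        using True by (simp add: Phi_def lambda_update_def y_def mult_exp_exp algebra_simps)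
      also have "\<dots> \<le> exp (\<eta>*z2 + \<kappa>*max 1 (l/F)) * (exp (-\<eta> * real z) * prod_list (map Y ys))"
        using ez by (intro mult_left_mono) auto
      also have "\<dots> = C1 * prod_list (map Y ys)" by (simp add: C1_def mult_exp_exp algebra_simps)
      also have "\<dots> \<le> C1 * prod_list (map Y ys) + C2 * prod_list (map NDY ys)" using PN0 by (simp add: C2_def)
      finally show ?thesis .
    next
      case False
      have allND: "\<forall>w\<in>set ys. ND x w = 1"
      proof
        fix w assume w: "w \<in> set ys"
        show "ND x w = 1"
        proof (rule ccontr)
          assume "ND x w \<noteq> 1"
          then have "ND x w = 0" using ND_01 by metis
          moreover have lw: "length w = length x" using mutate_len ymut w by blast
          ultimately have dom: "w \<noteq> x" "\<forall>j<length x. x!j \<le> w!j" using ND_zero_dom by blast+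
          have "strictly_monotone n f" using mono by (simp add: dyn_monotone_def f_def)
          then have "f x < f w" using dom lw len unfolding strictly_monotone_def by auto
          moreover obtain j where "j < length ys" "w = ys ! j" using w by (auto simp: in_set_conv_nth)
          ultimately have "f x < f y" using best y_def by (metis less_le_trans)
          with False show False by simp
        qed
      qed
      have eqm: "prod_list (map NDY ys) = prod_list (map Y ys)"
        using allND by (simp add: NDY_def cong: map_cong)
      have "Phi \<eta> \<kappa> z2 (zeros (ys!i)) (lambda_update s F (f x < f (ys!i)) l) = exp (\<eta>*z2 + \<kappa>*(Fs*l)) * exp (-\<eta> * real (zeros y))"
        using False by (simp add: Phi_def lambda_update_def y_def Fs_def mult_exp_exp algebra_simps)
      also have "\<dots> \<le> exp (\<eta>*z2 + \<kappa>*(Fs*l)) * (exp (-\<eta> * real z) * prod_list (map Y ys))"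
        using ez by (intro mult_left_mono) auto
      also have "\<dots> = C2 * prod_list (map NDY ys)" by (simp add: C2_def eqm mult_exp_exp algebra_simps)
      also have "\<dots> \<le> C1 * prod_list (map Y ys) + C2 * prod_list (map NDY ys)" using PY0 by (simp add: C1_def)
      finally show ?thesis .
    qed
  qed
  also have "\<dots> = (\<integral>\<^sup>+ys. ennreal (C1 * prod_list (map Y ys)) \<partial>offspring p k x) + (\<integral>\<^sup>+ys. ennreal (C2 * prod_list (map NDY ys)) \<partial>offspring p k x)"
  proof -
    have "\<And>ys. ennreal (C1 * prod_list (map Y ys) + C2 * prod_list (map NDY ys)) = ennreal (C1 * prod_list (map Y ys)) + ennreal (C2 * prod_list (map NDY ys))"
      using Y0 NDY0 by (intro ennreal_plus) (auto simp: C1_def C2_def intro!: prod_list_nonneg mult_nonneg_nonneg)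
    then show ?thesis by (simp add: nn_integral_add)
  qed
  also have "\<dots> \<le> ennreal (Phi \<eta> \<kappa> z2 z l + 2*exp(3*\<kappa>)*exp(-\<eta>*real n/6))"
  proof -
    define A where "A = ((1-p)*1 + p*exp \<eta>)^z"
    define Dm where "Dm = (1-p)^(n-z)"
    define Eq where "Eq = (1-p)^z * (1-p)^(n-z)"
    have wY0: "\<And>a b. 0 \<le> wY \<eta> a b" by (simp add: wY_def)
    have EY: "(\<integral>\<^sup>+y. ennreal (Y y) \<partial>mutate p x) = ennreal A"
      unfolding Y_def by (subst mutate_W[OF p0 wY0]) (simp add: prod_map_bool wY_def A_def z_def len)
    have ED: "(\<integral>\<^sup>+y. ennreal (W wD x y) \<partial>mutate p x) = ennreal Dm"
      by (subst mutate_W[OF p0]) (auto simp: prod_map_bool wD_def Dm_def z_def len)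
    have EE: "(\<integral>\<^sup>+y. ennreal (W wE x y) \<partial>mutate p x) = ennreal Eq"
      by (subst mutate_W[OF p0]) (auto simp: prod_map_bool wE_def Eq_def z_def len)
    have A0: "0 \<le> A" using p0 by (simp add: A_def)
    have D0: "0 \<le> Dm" "0 \<le> Eq" using p0 by (auto simp: Dm_def Eq_def)
    have "(\<integral>\<^sup>+y. ennreal (NDY y) \<partial>mutate p x) + ennreal Dm = (\<integral>\<^sup>+y. ennreal (NDY y) + ennreal (W wD x y) \<partial>mutate p x)"
      by (simp add: nn_integral_add ED)
    also have "\<dots> \<le> (\<integral>\<^sup>+y. ennreal (Y y) + ennreal (W wE x y) \<partial>mutate p x)"
    proof (rule nn_integral_mono_AE)
      show "AE y in measure_pmf (mutate p x). ennreal (NDY y) + ennreal (W wD x y) \<le> ennreal (Y y) + ennreal (W wE x y)"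
        unfolding AE_measure_pmf_iff
      proof
        fix y assume "y \<in> set_pmf (mutate p x)"
        then have ly: "length y = length x" by (rule mutate_len)
        have "NDY y + W wD x y \<le> Y y + W wE x y" unfolding NDY_def Y_def using ND_pointwise[OF ly] eta by auto
        moreover have "0 \<le> W wD x y" "0 \<le> W wE x y" by (auto intro!: W_nonneg simp: wD_def wE_def)
        ultimately show "ennreal (NDY y) + ennreal (W wD x y) \<le> ennreal (Y y) + ennreal (W wE x y)"
          using NDY0[of y] Y1[of y] by (simp add: ennreal_plus[symmetric] del: ennreal_plus)
      qed
    qed
    also have "\<dots> = ennreal A + ennreal Eq" by (simp add: nn_integral_add EY EE)
    finally have Isum: "(\<integral>\<^sup>+y. ennreal (NDY y) \<partial>mutate p x) + ennreal Dm \<le> ennreal A + ennreal Eq" .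
    have "(\<integral>\<^sup>+y. ennreal (NDY y) \<partial>mutate p x) \<le> (\<integral>\<^sup>+y. ennreal (NDY y) \<partial>mutate p x) + ennreal Dm"
      by (rule add_increasing2) auto
    then have "(\<integral>\<^sup>+y. ennreal (NDY y) \<partial>mutate p x) \<le> ennreal A + ennreal Eq" using Isum by (rule order_trans)
    then have "(\<integral>\<^sup>+y. ennreal (NDY y) \<partial>mutate p x) \<noteq> \<top>"
      by (metis ennreal_add_eq_top ennreal_neq_top top.extremum_uniqueI)
    then obtain r where r0: "0 \<le> r" and rI: "(\<integral>\<^sup>+y. ennreal (NDY y) \<partial>mutate p x) = ennreal r"
      by (cases "\<integral>\<^sup>+y. ennreal (NDY y) \<partial>mutate p x" rule: ennreal_cases) auto
    have "ennreal (r + Dm) \<le> ennreal (A + Eq)" using Isum rI r0 D0 A0 by (simp add: ennreal_plus[symmetric] del: ennreal_plus)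
    then have rle: "r + Dm \<le> A + Eq" using A0 D0 by (metis ennreal_le_iff add_nonneg_nonneg)
    have pz: "p * real z \<le> c"
    proof -
      have "p * real z \<le> p * real n" using zeros_le[of x] len p0 by (intro mult_left_mono) (auto simp: z_def)
      then show ?thesis using p_def n by simp
    qed
    have Ab: "A \<le> 1 + q0/2" unfolding A_def using A_bound[OF p0(1) pz c(1) eta(1) _ eta(3) q0_pos(1)] eta by simp
    have qb: "exp (-2*c) * (1 - exp (-c*\<epsilon>/2)) \<le> (1-p)^(n-z) * (1 - (1-p)^z)"
      by (rule q_bound[OF _ p_def c _ _ eps(1)]) (use n zeros_le[of x] len zz in \<open>auto simp: z_def\<close>)
    have rb: "r \<le> 1 - q0/2"
    proof -
      have "Dm - Eq = (1-p)^(n-z) * (1 - (1-p)^z)" by (simp add: Dm_def Eq_def algebra_simps)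
      then show ?thesis using rle Ab qb q0 by linarith
    qed
    have "(\<integral>\<^sup>+ys. ennreal (C1 * prod_list (map Y ys)) \<partial>offspring p k x) = ennreal C1 * ennreal A ^ k"
      by (subst nn_integral_cmult_real) (auto simp: C1_def offspring_prod[OF Y0] EY Y0 intro!: prod_list_nonneg)
    moreover have "(\<integral>\<^sup>+ys. ennreal (C2 * prod_list (map NDY ys)) \<partial>offspring p k x) = ennreal C2 * ennreal r ^ k"
      by (subst nn_integral_cmult_real) (auto simp: C2_def offspring_prod[OF NDY0] NDY0 rI intro!: prod_list_nonneg)
    moreover have "C1 * A ^ k + C2 * r ^ k \<le> Phi \<eta> \<kappa> z2 z l"
      unfolding C1_def C2_def Fs_def by (rule real_k2[OF l32 kb(2) kb(1) A0 Ab r0 rb])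
    ultimately show ?thesis using A0 r0
      by (simp add: ennreal_power ennreal_mult'[symmetric] ennreal_plus[symmetric] C1_def C2_def del: ennreal_plus)
         (rule ennreal_leI, smt (verit) exp_gt_zero mult_nonneg_nonneg)
  qed
  finally show ?thesis by (simp add: p_def z2_def f_def k_def z_def)
qed

lemma reach_bound:
  fixes n :: nat and adv :: adversary
  assumes n: "3 \<le> n" and mono: "dyn_monotone n adv"
  shows "\<forall>h x l. length x = n \<longrightarrow> 1 \<le> l \<longrightarrow>
     pmf (reach n c s F adv K h x l) True \<le> min 1 (Phi \<eta> \<kappa> (\<epsilon> * real n / 2) (zeros x) l) + real K * (2*exp(3*\<kappa>)*exp(-\<eta>*real n/6))"
proof (induction K)
  define z2 where "z2 = \<epsilon> * real n / 2"
  let ?\<beta> = "2*exp(3*\<kappa>)*exp(-\<eta>*real n/6)"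
  have z20: "0 \<le> z2" using eps by (simp add: z2_def)
  have b0: "0 \<le> ?\<beta>" by simp
  have Phi1: "\<And>x l. 1 \<le> l \<Longrightarrow> real (zeros x) \<le> z2 \<Longrightarrow> 1 \<le> Phi \<eta> \<kappa> z2 (zeros x) l"
  proof -
    fix x :: "bool list" and l :: real assume "1 \<le> l" "real (zeros x) \<le> z2"
    then have "0 \<le> \<eta> * (z2 - real (zeros x)) + \<kappa> * l" using eta kap by (intro add_nonneg_nonneg mult_nonneg_nonneg) auto
    then show "1 \<le> Phi \<eta> \<kappa> z2 (zeros x) l" by (simp add: Phi_def)
  qed
  have ones: "zeros (replicate n True) = 0" by (simp add: zeros_def)
  case 0
  show ?case
  proof (intro allI impI)
    fix h :: hist and x :: "bool list" and l :: real assume x: "length x = n" and l: "1 \<le> l"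
    show "pmf (reach n c s F adv 0 h x l) True \<le> min 1 (Phi \<eta> \<kappa> (\<epsilon> * real n / 2) (zeros x) l) + real 0 * ?\<beta>"
    proof (cases "x = replicate n True")
      case True
      then have "1 \<le> Phi \<eta> \<kappa> z2 (zeros x) l" using Phi1[OF l, of x] ones z20 by auto
      then show ?thesis using True by (simp add: z2_def)
    next
      case False
      have "0 \<le> Phi \<eta> \<kappa> z2 (zeros x) l" by (simp add: Phi_def)
      then show ?thesis using False by (simp add: z2_def)
    qed
  qed
next
  define z2 where "z2 = \<epsilon> * real n / 2"
  let ?\<beta> = "2*exp(3*\<kappa>)*exp(-\<eta>*real n/6)"
  have z20: "0 \<le> z2" using eps by (simp add: z2_def)
  have b0: "0 \<le> ?\<beta>" by simp
  have Phi1: "\<And>x l. 1 \<le> l \<Longrightarrow> real (zeros x) \<le> z2 \<Longrightarrow> 1 \<le> Phi \<eta> \<kappa> z2 (zeros x) l"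
  proof -
    fix x :: "bool list" and l :: real assume "1 \<le> l" "real (zeros x) \<le> z2"
    then have "0 \<le> \<eta> * (z2 - real (zeros x)) + \<kappa> * l" using eta kap by (intro add_nonneg_nonneg mult_nonneg_nonneg) auto
    then show "1 \<le> Phi \<eta> \<kappa> z2 (zeros x) l" by (simp add: Phi_def)
  qed
  have ones: "zeros (replicate n True) = 0" by (simp add: zeros_def)
  case (Suc K)
  show ?case
  proof (intro allI impI)
    fix h :: hist and x :: "bool list" and l :: real assume x: "length x = n" and l: "1 \<le> l"
    have Phi0: "0 \<le> Phi \<eta> \<kappa> z2 (zeros x) l" by (simp add: Phi_def)
    show "pmf (reach n c s F adv (Suc K) h x l) True \<le> min 1 (Phi \<eta> \<kappa> (\<epsilon> * real n / 2) (zeros x) l) + real (Suc K) * ?\<beta>"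
    proof (cases "x = replicate n True \<or> real (zeros x) \<le> z2")
      case True
      then have "real (zeros x) \<le> z2" using ones z20 by auto
      then have "1 \<le> Phi \<eta> \<kappa> z2 (zeros x) l" using Phi1[OF l] by auto
      then have "1 \<le> min 1 (Phi \<eta> \<kappa> (\<epsilon> * real n / 2) (zeros x) l) + real (Suc K) * ?\<beta>"
        using b0 by (simp add: z2_def)
      then show ?thesis using pmf_le_1[of "reach n c s F adv (Suc K) h x l" True] by linarith
    next
      case False
      then have nx: "x \<noteq> replicate n True" and zz: "z2 < real (zeros x)" by auto
      define f where "f = adv h x l"
      define k where "k = nat (round l)"
      define p where "p = c / real n"
      define NX where "NX = (\<lambda>ys i. Phi \<eta> \<kappa> z2 (zeros (ys!i)) (lambda_update s F (f x < f (ys!i)) l))"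
      have "ennreal (pmf (reach n c s F adv (Suc K) h x l) True)
          = (\<integral>\<^sup>+ys. \<integral>\<^sup>+i. ennreal (pmf (reach n c s F adv K (h @ [(x, l, ys)]) (ys ! i)
                 (lambda_update s F (f x < f (ys!i)) l)) True) \<partial>pmf_of_set (best_idx f ys) \<partial>offspring p k x)"
        using nx by (simp add: ennreal_pmf_bind f_def k_def p_def)
      also have "\<dots> \<le> (\<integral>\<^sup>+ys. \<integral>\<^sup>+i. (ennreal (NX ys i) + ennreal (real K * ?\<beta>)) \<partial>pmf_of_set (best_idx f ys) \<partial>offspring p k x)"
      proof (rule nested_mono)
        fix ys i assume ys: "ys \<in> set_pmf (offspring p k x)" and i: "i \<in> set_pmf (pmf_of_set (best_idx f ys))"
        have lys: "length ys = k" and ymut: "\<forall>y\<in>set ys. y \<in> set_pmf (mutate p x)" using offspring_set[OF ys] by auto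
        have k1: "1 \<le> k" using round_bounds(3)[OF l] by (simp add: k_def)
        have ne: "ys \<noteq> []" using lys k1 by auto
        have iS: "i \<in> best_idx f ys" using i best_idx_ne[OF ne] by simp
        then have "i < length ys" by (simp add: best_idx_def)
        then have "ys ! i \<in> set ys" by simp
        then have li: "length (ys ! i) = n" using ymut mutate_len x by blast
        have lu: "1 \<le> lambda_update s F (f x < f (ys!i)) l" by (rule lu_bounds(1)[OF l])
        have "pmf (reach n c s F adv K (h @ [(x, l, ys)]) (ys ! i) (lambda_update s F (f x < f (ys!i)) l)) True
            \<le> min 1 (NX ys i) + real K * ?\<beta>"
          using Suc.IH li lu by (simp add: NX_def z2_def)
        also have "\<dots> \<le> NX ys i + real K * ?\<beta>" by simp
        finally show "ennreal (pmf (reach n c s F adv K (h @ [(x, l, ys)]) (ys ! i) (lambda_update s F (f x < f (ys!i)) l)) True)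
            \<le> ennreal (NX ys i) + ennreal (real K * ?\<beta>)"
          using b0 by (simp add: ennreal_plus[symmetric] NX_def Phi_def del: ennreal_plus)
      qed
      also have "\<dots> = (\<integral>\<^sup>+ys. \<integral>\<^sup>+i. ennreal (NX ys i) \<partial>pmf_of_set (best_idx f ys) \<partial>offspring p k x) + ennreal (real K * ?\<beta>)"
        by (rule nested_add_const)
      also have "\<dots> \<le> ennreal (Phi \<eta> \<kappa> z2 (zeros x) l + ?\<beta>) + ennreal (real K * ?\<beta>)"
      proof (rule add_right_mono)
        show "(\<integral>\<^sup>+ys. \<integral>\<^sup>+i. ennreal (NX ys i) \<partial>pmf_of_set (best_idx f ys) \<partial>offspring p k x) \<le> ennreal (Phi \<eta> \<kappa> z2 (zeros x) l + ?\<beta>)"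
        proof (cases "k = 1")
          case True
          show ?thesis using step1[OF n x l _ zz[unfolded z2_def]] True
            by (simp add: NX_def z2_def f_def k_def p_def)
        next
          case False
          show ?thesis using step2[OF n mono x l _ zz[unfolded z2_def]] False
            by (simp add: NX_def z2_def f_def k_def p_def)
        qed
      qed
      also have "\<dots> = ennreal (Phi \<eta> \<kappa> z2 (zeros x) l + real (Suc K) * ?\<beta>)"
        using b0 Phi0 by (simp add: ennreal_plus[symmetric] algebra_simps del: ennreal_plus)
      finally have le1e: "ennreal (pmf (reach n c s F adv (Suc K) h x l) True) \<le> ennreal (Phi \<eta> \<kappa> z2 (zeros x) l + real (Suc K) * ?\<beta>)" .
      have pos: "0 \<le> Phi \<eta> \<kappa> z2 (zeros x) l + real (Suc K) * ?\<beta>" using b0 Phi0 by simp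
      have le1: "pmf (reach n c s F adv (Suc K) h x l) True \<le> Phi \<eta> \<kappa> z2 (zeros x) l + real (Suc K) * ?\<beta>"
        using le1e ennreal_le_iff[OF pos] by blast
      have le2: "pmf (reach n c s F adv (Suc K) h x l) True \<le> 1 + real (Suc K) * ?\<beta>"
        using pmf_le_1[of "reach n c s F adv (Suc K) h x l" True] b0 by (smt (verit) of_nat_0_le_iff mult_nonneg_nonneg)
      show ?thesis using le1 le2 by (simp add: z2_def min_def)
    qed
  qed
qed

end



lemma exp_pow_tendsto: "0 < (b::real) \<Longrightarrow> (\<lambda>n::nat. exp (-b) ^ n) \<longlonglongrightarrow> 0"
  by (rule LIMSEQ_power_zero) simp

theorem mainTheorem6:
  fixes c F :: real
  assumes "0 < c" and "c \<le> 1" and "1 < F"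
  shows "\<forall>\<epsilon>>0. \<exists>s1>0. \<forall>s\<ge>s1. \<exists>\<delta>>0. \<exists>p :: nat \<Rightarrow> real. p \<longlonglongrightarrow> 0 \<and>
           (\<forall>n adv x0. dyn_monotone n adv \<longrightarrow> length x0 = n \<longrightarrow> real (zeros x0) \<ge> \<epsilon> * real n \<longrightarrow>
              prob_T_le n c s F adv x0 (nat \<lfloor>exp (\<delta> * real n / (ln (real n))\<^sup>2)\<rfloor>) \<le> p n)"
proof (intro allI impI)
  fix e :: real assume e: "0 < e"
  define \<epsilon> where "\<epsilon> = min e (1/3)"
  define q0 where "q0 = exp (-2*c) * (1 - exp (-c*\<epsilon>/2))"
  define \<eta> where "\<eta> = min (1/6) (ln (1 + q0/2) / (2*c))"
  define \<mu> where "\<mu> = min (1/3) (1 - 1/F)"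
  define m where "m = - ln (1 - exp (-q0/6))"
  define \<kappa> where "\<kappa> = (q0 + m) / \<mu>"
  define \<nu> where "\<nu> = min 1 (min (q0/6) (c*\<eta>/9) / \<kappa>)"
  define s1 where "s1 = ln F / ln (1 + \<nu>)"
  have eps: "0 < \<epsilon>" "\<epsilon> \<le> 1/3" using e by (auto simp: \<epsilon>_def)
  have ce: "0 < c*\<epsilon>" using assms(1) eps by simp
  have q0p: "0 < q0" "q0 < 1"
  proof -
    have "exp (-c*\<epsilon>/2) < 1" using ce by simp
    then show "0 < q0" by (simp add: q0_def)
    have "exp (-2*c) < 1" using assms by simp
    then have "exp (-2*c) * (1 - exp (-c*\<epsilon>/2)) < 1 * 1"
      using \<open>exp (-c*\<epsilon>/2) < 1\<close> by (intro mult_less_le_imp_less) auto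
    then show "q0 < 1" by (simp add: q0_def)
  qed
  have eta: "0 < \<eta>" "\<eta> \<le> 1/6" "\<eta> \<le> ln (1 + q0/2) / (2*c)"
    using q0p assms(1) by (auto simp: \<eta>_def)
  have mu: "0 < \<mu>" using assms(3) by (simp add: \<mu>_def)
  have m0: "0 < m"
  proof -
    have "0 < exp (-q0/6)" "exp (-q0/6) < 1" using q0p by auto
    then show ?thesis by (simp add: m_def)
  qed
  have kap: "\<kappa> * \<mu> = q0 + m" "0 < \<kappa>" using mu m0 q0p by (auto simp: \<kappa>_def)
  have nu: "0 < \<nu>" "\<nu> \<le> 1" "\<kappa> * \<nu> \<le> q0/6" "\<kappa> * \<nu> \<le> c*\<eta>/9"
  proof -
    have "0 < min (q0/6) (c*\<eta>/9)" using q0p eta assms by simp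
    then show "0 < \<nu>" using kap by (simp add: \<nu>_def)
    show "\<nu> \<le> 1" by (simp add: \<nu>_def)
    have "\<kappa> * \<nu> \<le> \<kappa> * (min (q0/6) (c*\<eta>/9) / \<kappa>)" using kap by (intro mult_left_mono) (auto simp: \<nu>_def)
    also have "\<dots> = min (q0/6) (c*\<eta>/9)" using kap by simp
    finally show "\<kappa> * \<nu> \<le> q0/6" "\<kappa> * \<nu> \<le> c*\<eta>/9" by auto
  qed
  have s1: "0 < s1" using nu assms(3) by (simp add: s1_def)
  show "\<exists>s1>0. \<forall>s\<ge>s1. \<exists>\<delta>>0. \<exists>p :: nat \<Rightarrow> real. p \<longlonglongrightarrow> 0 \<and>
           (\<forall>n adv x0. dyn_monotone n adv \<longrightarrow> length x0 = n \<longrightarrow> real (zeros x0) \<ge> e * real n \<longrightarrow>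
              prob_T_le n c s F adv x0 (nat \<lfloor>exp (\<delta> * real n / (ln (real n))\<^sup>2)\<rfloor>) \<le> p n)"
  proof (intro exI conjI allI impI)
    show "0 < s1" by (rule s1)
    fix s assume s: "s1 \<le> s"
    have s0: "0 < s" using s s1 by linarith
    have Fs: "F powr (1/s) \<le> 1 + \<nu>"
    proof -
      have "F powr (1/s) = exp (ln F / s)" using assms(3) by (simp add: powr_def divide_inverse)
      also have "\<dots> \<le> exp (ln F / s1)" using s s1 assms(3) by (intro exp_mono divide_left_mono) auto
      also have "\<dots> = 1 + \<nu>" using nu assms(3) by (simp add: s1_def)
      finally show ?thesis .
    qed
    have Fs1: "1 \<le> F powr (1/s)" using assms(3) s0 by (simp add: ge_one_powr_ge_zero)
    interpret setting c F s \<epsilon> \<eta> \<kappa> q0 \<mu> m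
    proof
      have "\<kappa> * (F powr (1/s) - 1) \<le> \<kappa> * \<nu>" using Fs kap by (intro mult_left_mono) auto
      then show "\<kappa> * (F powr (1/s) - 1) \<le> q0/6" "\<kappa> * (F powr (1/s) - 1) \<le> c*\<eta>/9" using nu by linarith+
      show "F powr (1/s) \<le> 2" using Fs nu by simp
      show "0 < c" "c \<le> 1" "1 < F" "0 < s" using assms s0 by auto
      show "0 < \<epsilon>" "\<epsilon> \<le> 1/3" by (rule eps)+
      show "q0 = exp (-2*c) * (1 - exp (-c*\<epsilon>/2))" by (rule q0_def)
      show "0 < \<eta>" "\<eta> \<le> 1/6" "\<eta> \<le> ln (1 + q0/2) / (2*c)" by (rule eta)+
      show "\<mu> = min (1/3) (1 - 1/F)" by (rule \<mu>_def)
      show "m = - ln (1 - exp (-q0/6))" by (rule m_def)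
      show "\<kappa> * \<mu> = q0 + m" "0 < \<kappa>" by (rule kap)+
    qed
    define \<delta> where "\<delta> = \<eta> / 12"
    define P where "P = (\<lambda>n::nat. if n < 3 then 1 else exp \<kappa> * exp (-(\<eta>*\<epsilon>/2)) ^ n + 2*exp(3*\<kappa>) * exp (-(\<eta>/12)) ^ n)"
    show "0 < \<delta>" using eta by (simp add: \<delta>_def)
    show "P \<longlonglongrightarrow> 0"
    proof -
      have "(\<lambda>n::nat. exp \<kappa> * exp (-(\<eta>*\<epsilon>/2)) ^ n + 2*exp(3*\<kappa>) * exp (-(\<eta>/12)) ^ n) \<longlonglongrightarrow> exp \<kappa> * 0 + 2*exp(3*\<kappa>) * 0"
        using eta eps by (intro tendsto_intros exp_pow_tendsto) auto
      then have L: "(\<lambda>n::nat. exp \<kappa> * exp (-(\<eta>*\<epsilon>/2)) ^ n + 2*exp(3*\<kappa>) * exp (-(\<eta>/12)) ^ n) \<longlonglongrightarrow> 0" by simp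
      show ?thesis
        by (rule Lim_transform_eventually[OF L]) (auto simp: P_def eventually_sequentially intro!: exI[of _ 3])
    qed
    fix n adv x0
    assume mono: "dyn_monotone n adv" and len: "length x0 = n" and z0: "e * real n \<le> real (zeros x0)"
    show "prob_T_le n c s F adv x0 (nat \<lfloor>exp (\<delta> * real n / (ln (real n))\<^sup>2)\<rfloor>) \<le> P n"
    proof (cases "n < 3")
      case True
      have "prob_T_le n c s F adv x0 (nat \<lfloor>exp (\<delta> * real n / (ln (real n))\<^sup>2)\<rfloor>) \<le> 1"
        unfolding prob_T_le_def by (rule measure_pmf.prob_le_1)
      then show ?thesis using True by (simp add: P_def)
    next
      case False
      then have n3: "3 \<le> n" by simp
      define K where "K = nat \<lfloor>exp (\<delta> * real n / (ln (real n))\<^sup>2)\<rfloor>"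
      define \<beta> where "\<beta> = 2*exp(3*\<kappa>)*exp(-\<eta>*real n/6)"
      have b0: "0 \<le> \<beta>" by (simp add: \<beta>_def)
      have "prob_T_le n c s F adv x0 K = pmf (reach n c s F adv K [] x0 1) True"
        by (simp add: prob_T_le_def measure_pmf_single)
      also have "\<dots> \<le> min 1 (Phi \<eta> \<kappa> (\<epsilon> * real n / 2) (zeros x0) 1) + real K * \<beta>"
        unfolding \<beta>_def using reach_bound[OF n3 mono, of K, rule_format, OF len order_refl, of "[]"] by simp
      also have "\<dots> \<le> Phi \<eta> \<kappa> (\<epsilon> * real n / 2) (zeros x0) 1 + real K * \<beta>" by simp
      also have "Phi \<eta> \<kappa> (\<epsilon> * real n / 2) (zeros x0) 1 \<le> exp \<kappa> * exp (-(\<eta>*\<epsilon>/2)) ^ n"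
      proof -
        have "\<epsilon> * real n \<le> e * real n" by (intro mult_right_mono) (auto simp: \<epsilon>_def)
        then have "\<epsilon> * real n / 2 - real (zeros x0) \<le> - (\<epsilon> * real n / 2)" using z0 by linarith
        then have "\<eta> * (\<epsilon> * real n / 2 - real (zeros x0)) \<le> \<eta> * (- (\<epsilon> * real n / 2))"
          using eta by (intro mult_left_mono) auto
        then have "Phi \<eta> \<kappa> (\<epsilon> * real n / 2) (zeros x0) 1 \<le> exp (\<kappa> + real n * (-(\<eta>*\<epsilon>/2)))"
          by (simp add: Phi_def algebra_simps)
        also have "\<dots> = exp \<kappa> * exp (real n * (-(\<eta>*\<epsilon>/2)))" by (rule exp_add)
        also have "\<dots> = exp \<kappa> * exp (-(\<eta>*\<epsilon>/2)) ^ n" by (simp only: exp_of_nat_mult)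
        finally show ?thesis .
      qed
      also have "real K * \<beta> \<le> 2*exp(3*\<kappa>) * exp (-(\<eta>/12)) ^ n"
      proof -
        have ln1: "1 \<le> ln (real n)"
        proof -
          have "exp 1 \<le> real n" using exp_le n3 by linarith
          then have "ln (exp 1) \<le> ln (real n)" using n3 by (subst ln_le_cancel_iff) auto
          then show ?thesis by simp
        qed
        then have ln2: "1 \<le> (ln (real n))\<^sup>2" by (simp add: one_le_power)
        have dn: "0 \<le> \<delta> * real n" using eta by (simp add: \<delta>_def)
        have "\<delta> * real n / (ln (real n))\<^sup>2 \<le> \<delta> * real n / 1"
          using ln2 dn by (intro divide_left_mono) auto
        then have e1: "exp (\<delta> * real n / (ln (real n))\<^sup>2) \<le> exp (\<delta> * real n)" by simp
        have f0: "0 \<le> \<lfloor>exp (\<delta> * real n / (ln (real n))\<^sup>2)\<rfloor>" by simp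
        have "real K = real_of_int \<lfloor>exp (\<delta> * real n / (ln (real n))\<^sup>2)\<rfloor>"
          unfolding K_def using f0 by simp
        also have "\<dots> \<le> exp (\<delta> * real n / (ln (real n))\<^sup>2)" by (rule of_int_floor_le)
        finally have Kb: "real K \<le> exp (\<delta> * real n)" using e1 by linarith
        have "real K * \<beta> \<le> exp (\<delta> * real n) * \<beta>" using Kb b0 by (intro mult_right_mono) auto
        also have "\<dots> = 2*exp(3*\<kappa>) * exp (real n * (-(\<eta>/12)))"
          by (simp add: \<beta>_def \<delta>_def mult_exp_exp algebra_simps)
        also have "\<dots> = 2*exp(3*\<kappa>) * exp (-(\<eta>/12)) ^ n" by (simp only: exp_of_nat_mult)
        finally show ?thesis .
      qed
      finally show ?thesis using False by (simp add: P_def K_def)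
    qed
  qed
qed


end
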